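(* Assume $\bar\Phi_p=0$, $\Phi_p^\top\Phi_p=\mathrm{diag}(\sigma_1^2,\dots,\sigma_d^2)$ with all $\sigma_j^2>0$, $\delta>0$, $\lambda\ge0$, and that every entry of $\hat\beta_{\mathrm{ols}}$ is nonzero. Let $\hat\beta^\lambda_{\mathrm{lasso}}$ be the (unique) minimizer of $\|Y_p-\Phi_p\beta\|_2^2+\lambda\|\beta\|_1$ and $I_\lambda:=\{j:\hat\beta^\lambda_{\mathrm{lasso},j}\neq0\}$. Let $\hat\Phi_q^\delta:=\mathcal T_\delta(\bar\Phi_q-\bar\Phi_p)$ be the reweighted features of the $\ell_\infty$ balancing weights with parameter $\delta$, and $I_\delta:=\{j:\hat\Phi^\delta_{q,j}\neq0\}$. Let $\hat\beta_{\ell_\infty}$ be the augmented coefficients obtained with $\hat\beta_{\mathrm{reg}}=\hat\beta^\lambda_{\mathrm{lasso}}$, i.e. with $\Delta_j:=\bar\Phi_{q,j}-\bar\Phi_{p,j}$, $\hat\beta_{\ell_\infty,j}=\hat\beta^\lambda_{\mathrm{lasso},j}$ if $|\Delta_j|<\delta$ and $\hat\beta_{\ell_\infty,j}=|\delta/\Delta_j|\hat\beta^\lambda_{\mathrm{lasso},j}+(1-|\delta/\Delta_j|)\hat\beta_{\mathrm{ols},j}$ otherwise. Then $$\{j:\hat\beta_{\ell_\infty,j}\neq0\}=I_\lambda\cup I_\delta.$$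
   Context: $\Phi_p\in\mathbb{R}^{n\times d}$, $Y_p\in\mathbb{R}^n$, $\Phi_q\in\mathbb{R}^{n\times d}$, column averages $\bar\Phi_p,\bar\Phi_q$. $\hat\beta_{\mathrm{ols}}:=(\Phi_p^\top\Phi_p)^{-1}\Phi_p^\top Y_p$. $\mathcal T_t$ is entrywise soft-thresholding: $\mathcal T_t(z)=0$ if $|z|\le t$, $z-t$ if $z>t$, $z+t$ if $z<-t$. By the preceding result, $\bar\Phi_q\hat\beta_{\ell_\infty}$ equals the lasso outcome model augmented with $\ell_\infty$ balancing weights. *)

theory Defs
  imports "HOL-Analysis.Analysis"
begin

definition col_avg :: "real^'d^'n \<Rightarrow> real^'d" where
  "col_avg \<Phi> = (\<chi> j. (\<Sum>i\<in>UNIV. \<Phi> $ i $ j) / real CARD('n))"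

definition beta_ols :: "real^'d^'n \<Rightarrow> real^'n \<Rightarrow> real^'d" where
  "beta_ols \<Phi> Y = matrix_inv (transpose \<Phi> ** \<Phi>) *v (transpose \<Phi> *v Y)"

definition lasso_obj :: "real^'d^'n \<Rightarrow> real^'n \<Rightarrow> real \<Rightarrow> real^'d \<Rightarrow> real" where
  "lasso_obj \<Phi> Y lam \<beta> = (norm (Y - \<Phi> *v \<beta>))^2 + lam * (\<Sum>j\<in>UNIV. \<bar>\<beta> $ j\<bar>)"

definition is_lasso_minimizer :: "real^'d^'n \<Rightarrow> real^'n \<Rightarrow> real \<Rightarrow> real^'d \<Rightarrow> bool" where
  "is_lasso_minimizer \<Phi> Y lam \<beta> \<longleftrightarrow> (\<forall>\<gamma>. lasso_obj \<Phi> Y lam \<beta> \<le> lasso_obj \<Phi> Y lam \<gamma>)"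

definition soft_thresh :: "real \<Rightarrow> real \<Rightarrow> real" where
  "soft_thresh t z = (if \<bar>z\<bar> \<le> t then 0 else if z > t then z - t else z + t)"

definition beta_linf :: "real^'d^'n \<Rightarrow> real^'n \<Rightarrow> real^'d^'n \<Rightarrow> real \<Rightarrow> real^'d \<Rightarrow> real^'d" where
  "beta_linf \<Phi>p Y \<Phi>q \<delta> \<beta>reg = (\<chi> j.
     (let \<Delta> = col_avg \<Phi>q $ j - col_avg \<Phi>p $ j in
      if \<bar>\<Delta>\<bar> < \<delta> then \<beta>reg $ j
      else \<bar>\<delta> / \<Delta>\<bar> * \<beta>reg $ j + (1 - \<bar>\<delta> / \<Delta>\<bar>) * beta_ols \<Phi>p Y $ j))"

end

theory Submission
  imports Defs
begin

lemma if_mult_z: "((if c then a else 0) * (y::real)) = (if c then a * y else 0)"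
  "(y::real) * (if c then a else 0) = (if c then y * a else 0)"
  by auto

lemma diag_mult:
  fixes \<sigma>2 x :: "real^'d"
  shows "((\<chi> j k. if j = k then \<sigma>2 $ j else 0) :: real^'d^'d) *v x = (\<chi> j. \<sigma>2 $ j * x $ j)"
  by (simp add: matrix_vector_mult_def vec_eq_iff if_mult_z sum.delta)

lemma inner_mv:
  fixes \<Phi> :: "real^'d^'n" and r :: "real^'n" and u :: "real^'d"
  shows "r \<bullet> (\<Phi> *v u) = (transpose \<Phi> *v r) \<bullet> u"
  by (simp add: dot_lmul_matrix)

theorem mainTheorem8:
  fixes \<Phi>p \<Phi>q :: "real^'d^'n" and Y :: "real^'n"
    and \<sigma>2 :: "real^'d" and \<delta> lam :: real and \<beta>lasso :: "real^'d"
  assumes "col_avg \<Phi>p = 0"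
    and "transpose \<Phi>p ** \<Phi>p = (\<chi> j k. if j = k then \<sigma>2 $ j else 0)"
    and "\<forall>j. \<sigma>2 $ j > 0"
    and "\<delta> > 0" and "lam \<ge> 0"
    and "\<forall>j. beta_ols \<Phi>p Y $ j \<noteq> 0"
    and "is_lasso_minimizer \<Phi>p Y lam \<beta>lasso"
  shows "{j. beta_linf \<Phi>p Y \<Phi>q \<delta> \<beta>lasso $ j \<noteq> 0}
         = {j. \<beta>lasso $ j \<noteq> 0}
           \<union> {j. soft_thresh \<delta> (col_avg \<Phi>q $ j - col_avg \<Phi>p $ j) \<noteq> 0}"
proof -
  define A where "A = transpose \<Phi>p ** \<Phi>p"
  define b where "b = transpose \<Phi>p *v Y"
  define ols where "ols = beta_ols \<Phi>p Y"
  have Amul: "A *v x = (\<chi> j. \<sigma>2 $ j * x $ j)" for x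
    unfolding A_def assms(2) by (rule diag_mult)
  define D :: "real^'d^'d" where "D = (\<chi> j k. if j = k then 1 / \<sigma>2 $ j else 0)"
  have "A ** D = mat 1 \<and> D ** A = mat 1"
    using assms(3) unfolding A_def assms(2) D_def
    by (auto simp add: matrix_matrix_mult_def vec_eq_iff mat_def if_mult_z sum.delta
        dest: spec[where x="_ :: 'd"]) (metis less_irrefl)
  hence "\<exists>A'. A ** A' = mat 1 \<and> A' ** A = mat 1" by blast
  hence inv: "A ** matrix_inv A = mat 1"
    unfolding matrix_inv_def by (rule someI_ex[where P="\<lambda>A'. A ** A' = mat 1 \<and> A' ** A = mat 1", THEN conjunct1])
  have "A *v ols = b"
    unfolding ols_def beta_ols_def b_def A_def[symmetric]
    by (simp add: matrix_vector_mul_assoc inv)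
  hence olsj: "\<sigma>2 $ j * ols $ j = b $ j" for j
    unfolding Amul by (simp add: vec_eq_iff)
  have sgn: "\<beta>lasso $ j * b $ j \<ge> 0" for j
  proof (rule ccontr)
    assume neg: "\<not> ?thesis"
    define e :: "real^'d" where "e = axis j 1"
    define \<gamma> where "\<gamma> = \<beta>lasso - (2 * \<beta>lasso $ j) *\<^sub>R e"
    define r where "r = Y - \<Phi>p *v \<beta>lasso"
    have abs_eq: "\<bar>\<gamma> $ k\<bar> = \<bar>\<beta>lasso $ k\<bar>" for k
      by (cases "k = j") (auto simp: \<gamma>_def e_def axis_def)
    have res: "Y - \<Phi>p *v \<gamma> = r + (2 * \<beta>lasso $ j) *\<^sub>R (\<Phi>p *v e)"
      unfolding \<gamma>_def r_def
      by (simp add: matrix_vector_mult_diff_distrib matrix_vector_mult_scaleR algebra_simps)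
    have tr: "transpose \<Phi>p *v r = b - A *v \<beta>lasso"
      unfolding r_def b_def A_def
      by (simp add: matrix_vector_mult_diff_distrib matrix_vector_mul_assoc[symmetric])
    have i1: "r \<bullet> (\<Phi>p *v e) = b $ j - \<sigma>2 $ j * \<beta>lasso $ j"
      unfolding inner_mv tr e_def by (simp add: inner_axis Amul)
    have i2: "(\<Phi>p *v e) \<bullet> (\<Phi>p *v e) = \<sigma>2 $ j"
      unfolding inner_mv e_def
      by (simp add: matrix_vector_mul_assoc A_def[symmetric] inner_axis Amul)
    have "(norm (Y - \<Phi>p *v \<gamma>))^2 = (norm r)^2 + 4 * \<beta>lasso $ j * b $ j"
      unfolding res power2_norm_eq_inner
      by (simp add: inner_add_left inner_add_right i1 i2 inner_commute[of "\<Phi>p *v e" r] algebra_simps)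
    hence "lasso_obj \<Phi>p Y lam \<gamma> < lasso_obj \<Phi>p Y lam \<beta>lasso"
      using neg unfolding lasso_obj_def r_def by (simp add: abs_eq)
    thus False using assms(7) unfolding is_lasso_minimizer_def by (meson not_le)
  qed
  show ?thesis
  proof (intro set_eqI iffI)
    fix j
    assume "j \<in> {j. beta_linf \<Phi>p Y \<Phi>q \<delta> \<beta>lasso $ j \<noteq> 0}"
    thus "j \<in> {j. \<beta>lasso $ j \<noteq> 0} \<union> {j. soft_thresh \<delta> (col_avg \<Phi>q $ j - col_avg \<Phi>p $ j) \<noteq> 0}"
      using assms(4) unfolding beta_linf_def soft_thresh_def Let_def
      by (auto split: if_splits)
  next
    fix j
    assume as: "j \<in> {j. \<beta>lasso $ j \<noteq> 0} \<union> {j. soft_thresh \<delta> (col_avg \<Phi>q $ j - col_avg \<Phi>p $ j) \<noteq> 0}"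
    define \<Delta> where "\<Delta> = col_avg \<Phi>q $ j - col_avg \<Phi>p $ j"
    define c where "c = \<bar>\<delta> / \<Delta>\<bar>"
    have sj: "\<sigma>2 $ j > 0" using assms(3) by auto
    have oj: "ols $ j \<noteq> 0" using assms(6) ols_def by auto
    have sg: "\<beta>lasso $ j * ols $ j \<ge> 0"
    proof -
      have "\<beta>lasso $ j * b $ j = \<sigma>2 $ j * (\<beta>lasso $ j * ols $ j)"
        using olsj[of j] by (simp add: algebra_simps)
      hence "0 \<le> \<sigma>2 $ j * (\<beta>lasso $ j * ols $ j)" using sgn[of j] by argo
      thus ?thesis using sj by (simp add: zero_le_mult_iff)
    qed
    show "j \<in> {j. beta_linf \<Phi>p Y \<Phi>q \<delta> \<beta>lasso $ j \<noteq> 0}"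
    proof (cases "\<bar>\<Delta>\<bar> < \<delta>")
      case True
      hence "soft_thresh \<delta> \<Delta> = 0" unfolding soft_thresh_def by auto
      thus ?thesis using as True unfolding beta_linf_def Let_def \<Delta>_def by auto
    next
      case False
      hence Dpos: "\<bar>\<Delta>\<bar> > 0" using assms(4) by auto
      have val: "beta_linf \<Phi>p Y \<Phi>q \<delta> \<beta>lasso $ j = c * \<beta>lasso $ j + (1 - c) * ols $ j"
        using False unfolding beta_linf_def Let_def c_def ols_def \<Delta>_def by simp
      show ?thesis
      proof (cases "\<bar>\<Delta>\<bar> = \<delta>")
        case True
        hence "c = 1" unfolding c_def using Dpos by (simp add: abs_divide)
        moreover have "soft_thresh \<delta> \<Delta> = 0" using True unfolding soft_thresh_def by auto
        ultimately show ?thesis using as val unfolding \<Delta>_def by auto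
      next
        case F2: False
        hence lt: "\<delta> < \<bar>\<Delta>\<bar>" using False by auto
        have c0: "0 < c" and c1: "c < 1" unfolding c_def using lt assms(4) Dpos
          by (auto simp: abs_divide divide_less_eq)
        have "c * \<beta>lasso $ j + (1 - c) * ols $ j \<noteq> 0"
        proof
          assume z: "c * \<beta>lasso $ j + (1 - c) * ols $ j = 0"
          hence "ols $ j * (c * \<beta>lasso $ j + (1 - c) * ols $ j) = 0" by simp
          hence "c * (\<beta>lasso $ j * ols $ j) + (1 - c) * (ols $ j)^2 = 0"
            by (simp add: algebra_simps power2_eq_square)
          moreover have "c * (\<beta>lasso $ j * ols $ j) \<ge> 0" using c0 sg by simp
          moreover have "(1 - c) * (ols $ j)^2 > 0" using c1 oj by simp
          ultimately show False by linarith
        qed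
        thus ?thesis using val by simp
      qed
    qed
  qed
qed

end
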